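(* Let $(k,|\cdot|)$ be an algebraically closed complete metrized field, $\mathbb{D}=\{t\in k:|t|<1\}$, $d\ge2$, and let $P_t(z)=\alpha_0(t)z^d+\cdots+\alpha_d(t)$ with $\alpha_i\in\mathcal{O}(\mathbb{D})[t^{-1}]$ and $\alpha_0(t)\ne0$ for $t\ne0$. Let $C>0$ be a constant such that $$\left|\frac1d\log\max\{1,|P_t(z)|\}-\log\max\{1,|z|\}\right|\le C\log|t|^{-1}\quad\text{for all }0<|t|\le\tfrac12,\ z\in k.$$ Let $a\in\mathcal{O}(\mathbb{D})[t^{-1}]$ be such that $u_m(t):=P_t^m(a(t))$ is analytic on $\mathbb{D}$ for all $m\ge0$, and set $g_m(t):=d^{-m}\log\max\{1,|u_m(t)|\}$. Let $l\ge Cd$ be an integer and let $Q_1,\dots,Q_N\in k[t]$ be polynomials such that for every $n\ge0$ there is $i_n\in\{1,\dots,N\}$ with $(u_n(t)-Q_{i_n}(t))/t^l$ analytic on $\mathbb{D}$. Put $A:=\max_{1\le j\le N}\left\{\sup_{|t|<1}|Q_j(t)|+2\right\}$. Let $n_0\ge1$ be an integer and $0<r_0\le\frac12$ with $\sup_{|t|<r_0}|u_{n_0}(t)|\le\log A$, and set $r_j:=r_0^{2^j}$ for $j\ge0$. Then for all $j\ge0$, $$\sup_{|t|<r_j}g_{n_0+j}(t)\le\frac{C_1}{d^{n_0}},\qquad\text{where }C_1=\frac{d}{d-1}\log(3A).$$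
   Context: $\mathcal{O}(\mathbb{D})$ is the ring of analytic functions on $\mathbb{D}$; $\mathcal{O}(\mathbb{D})[t^{-1}]$ consists of meromorphic functions on $\mathbb{D}$ with poles only at $0$. *)

theory Defs
  imports Complex_Main "HOL-Computational_Algebra.Polynomial"
begin

definition is_abs_val :: "('k::field \<Rightarrow> real) \<Rightarrow> bool" where
  "is_abs_val av \<longleftrightarrow>
     (\<forall>x. av x \<ge> 0) \<and> (\<forall>x. av x = 0 \<longleftrightarrow> x = 0) \<and>
     (\<forall>x y. av (x * y) = av x * av y) \<and> (\<forall>x y. av (x + y) \<le> av x + av y)"

definition av_complete :: "('k::field \<Rightarrow> real) \<Rightarrow> bool" where
  "av_complete av \<longleftrightarrow>
     (\<forall>X :: nat \<Rightarrow> 'k.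
        (\<forall>e>0. \<exists>M. \<forall>m\<ge>M. \<forall>n\<ge>M. av (X m - X n) < e) \<longrightarrow>
        (\<exists>L. \<forall>e>0. \<exists>M. \<forall>n\<ge>M. av (X n - L) < e))"

definition alg_closed :: "'k::field itself \<Rightarrow> bool" where
  "alg_closed _ \<longleftrightarrow> (\<forall>p :: 'k poly. degree p \<ge> 1 \<longrightarrow> (\<exists>x. poly p x = 0))"

definition av_sums :: "('k::field \<Rightarrow> real) \<Rightarrow> (nat \<Rightarrow> 'k) \<Rightarrow> 'k \<Rightarrow> bool" where
  "av_sums av f s \<longleftrightarrow> (\<lambda>n. av (s - (\<Sum>i<n. f i))) \<longlonglongrightarrow> 0"

definition analytic_D :: "('k::field \<Rightarrow> real) \<Rightarrow> ('k \<Rightarrow> 'k) \<Rightarrow> bool" where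
  "analytic_D av f \<longleftrightarrow>
     (\<exists>c :: nat \<Rightarrow> 'k. \<forall>t. av t < 1 \<longrightarrow> av_sums av (\<lambda>n. c n * t ^ n) (f t))"

text \<open>Elements of O(D)[t^-1]: meromorphic on D with poles only at 0
  (considered as functions on the punctured disc).\<close>
definition mero_D :: "('k::field \<Rightarrow> real) \<Rightarrow> ('k \<Rightarrow> 'k) \<Rightarrow> bool" where
  "mero_D av f \<longleftrightarrow>
     (\<exists>h (N::nat). analytic_D av h \<and> (\<forall>t. 0 < av t \<and> av t < 1 \<longrightarrow> f t = h t / t ^ N))"

end

theory Submission imports Defs "HOL-Computational_Algebra.Primes" begin


context fixes av :: "'k::field \<Rightarrow> real" assumes av: "is_abs_val av"
begin

lemma av_nonneg: "av x \<ge> 0" using av unfolding is_abs_val_def by blast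
lemma av_zero_iff: "av x = 0 \<longleftrightarrow> x = 0" using av unfolding is_abs_val_def by blast
lemma av_mult: "av (x * y) = av x * av y" using av unfolding is_abs_val_def by blast
lemma av_add: "av (x + y) \<le> av x + av y" using av unfolding is_abs_val_def by blast
lemma av_0[simp]: "av 0 = 0" using av_zero_iff by simp
lemma av_1[simp]: "av 1 = 1"
proof -
  have "av 1 = av 1 * av 1" using av_mult[of 1 1] by simp
  moreover have "av 1 \<noteq> 0" using av_zero_iff by simp
  ultimately show ?thesis by (metis mult_cancel_left1)
qed
lemma av_power: "av (x ^ n) = av x ^ n"
  by (induction n) (auto simp: av_mult)
lemma av_minus1: "av (-1) = 1"
proof -
  have "av (-1) * av (-1) = 1" using av_mult[of "-1" "-1"] by simp
  with av_nonneg[of "-1"] show ?thesis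
    by (smt (verit) power2_eq_1_iff power2_eq_square)
qed
lemma av_uminus: "av (- x) = av x"
  using av_mult[of "-1" x] av_minus1 by simp
lemma av_diff_le: "av (x - y) \<le> av x + av y"
  using av_add[of x "-y"] av_uminus[of y] by simp
lemma av_rev: "av x - av y \<le> av (x - y)"
  using av_add[of "x - y" y] by simp
lemma av_sum: "av (sum f S) \<le> (\<Sum>i\<in>S. av (f i))"
  by (induction S rule: infinite_finite_induct) (auto intro: order_trans[OF av_add])
lemma av_divide: "av (x / y) = av x / av y"
proof (cases "y = 0")
  case False
  have "av (x / y) * av y = av x" using av_mult[of "x/y" y] False by simp
  moreover have "av y \<noteq> 0" using False av_zero_iff by simp
  ultimately show ?thesis by (simp add: field_simps)
qed simp
lemma av_of_nat_le: "av (of_nat n) \<le> real n"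
proof (induction n)
  case (Suc n) then show ?case using av_add[of 1 "of_nat n"] by simp
qed simp

end

lemma pow_gcd_one:
  fixes w :: "'k::field"
  assumes "w ^ a = 1" "w ^ b = 1" shows "w ^ gcd a b = 1"
proof (cases "a = 0")
  case True then show ?thesis using assms by simp
next
  case False
  then obtain x y where xy: "a * x = b * y + gcd a b" using bezout_nat by blast
  have "w ^ (a * x) = 1" using assms by (simp add: power_mult)
  moreover have "w ^ (a * x) = w ^ (b * y) * w ^ gcd a b" by (simp add: xy power_add)
  moreover have "w ^ (b * y) = 1" using assms by (simp add: power_mult)
  ultimately show ?thesis by simp
qed

lemma alg_root:
  fixes p :: "'k::field poly"
  assumes "alg_closed TYPE('k)" "degree p \<ge> 1" shows "\<exists>x. poly p x = 0"
  using assms unfolding alg_closed_def by blast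

lemma exists_nontriv_root:
  fixes q :: nat
  assumes alg: "alg_closed TYPE('k::field)" and q: "q \<ge> 2" and qnz: "(of_nat q :: 'k) \<noteq> 0"
  shows "\<exists>\<eta>::'k. \<eta> ^ q = 1 \<and> \<eta> \<noteq> 1"
proof -
  define n where "n = q - 1"
  have qn: "q = Suc n" using q n_def by simp
  define p :: "'k poly" where "p = (\<Sum>i\<le>n. monom 1 i)"
  have "coeff p n = 1" unfolding p_def coeff_sum by simp
  then have "n \<le> degree p" by (intro le_degree) simp
  then have "degree p \<ge> 1" using q n_def by simp
  then obtain e where e: "poly p e = 0" using alg_root[OF alg] by blast
  have se: "(\<Sum>i\<le>n. e ^ i) = 0" using e unfolding p_def poly_sum poly_monom by simp
  have "e \<noteq> 1"
  proof
    assume "e = 1"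
    then have "(\<Sum>i\<le>n. e ^ i) = of_nat q" using qn by simp
    then show False using se qnz by simp
  qed
  moreover have "e ^ q = 1" using sum_gp_basic[of e n] se qn by simp
  ultimately show ?thesis by blast
qed

lemma exists_root_unity:
  fixes q :: nat
  assumes alg: "alg_closed TYPE('k::field)" and q: "prime q" and qnz: "(of_nat q :: 'k) \<noteq> 0"
  shows "\<exists>w::'k. w ^ (q ^ e) = 1 \<and> (\<forall>j. w ^ j = 1 \<longrightarrow> q ^ e dvd j)"
proof (cases e)
  case 0 then show ?thesis by (intro exI[of _ 1]) simp
next
  case (Suc e')
  have q2: "q \<ge> 2" using q prime_ge_2_nat by blast
  obtain \<eta> :: 'k where eta: "\<eta> ^ q = 1" "\<eta> \<noteq> 1" using exists_nontriv_root[OF alg q2 qnz] by blast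
  define p :: "'k poly" where "p = monom 1 (q ^ e') - [:\<eta>:]"
  have pos: "q ^ e' \<ge> 1" using q2 by simp
  have "coeff p (q ^ e') = 1" unfolding p_def using pos q2 by (simp add: coeff_diff coeff_pCons split: nat.split)
  then have "q ^ e' \<le> degree p" by (intro le_degree) simp
  then have "degree p \<ge> 1" using pos by simp
  then obtain w where w: "poly p w = 0" using alg_root[OF alg] by blast
  have wq: "w ^ (q ^ e') = \<eta>" using w unfolding p_def by (simp add: poly_monom)
  have w1: "w ^ (q ^ e) = 1"
  proof -
    have "w ^ (q ^ e) = (w ^ (q ^ e')) ^ q" using Suc by (simp add: power_mult[symmetric] mult.commute)
    then show ?thesis using wq eta by simp
  qed
  have "\<forall>j. w ^ j = 1 \<longrightarrow> q ^ e dvd j"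
  proof (intro allI impI)
    fix j assume j: "w ^ j = 1"
    have g1: "w ^ gcd j (q ^ e) = 1" using pow_gcd_one[OF j w1] .
    have "gcd j (q ^ e) dvd q ^ e" by simp
    then obtain f where f: "f \<le> e" "gcd j (q ^ e) = q ^ f"
      using divides_primepow_nat[OF q] by blast
    show "q ^ e dvd j"
    proof (cases "f = e")
      case True then show ?thesis using f by (metis gcd_dvd1)
    next
      case False
      then have "f \<le> e'" using f Suc by simp
      then have "q ^ f dvd q ^ e'" by (simp add: le_imp_power_dvd)
      then obtain c where "q ^ e' = q ^ f * c" by blast
      then have "w ^ (q ^ e') = 1" using g1 f by (simp add: power_mult)
      then show ?thesis using wq eta by simp
    qed
  qed
  then show ?thesis using w1 by blast
qed


lemma root_sum:
  fixes w :: "'k::field"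
  assumes w1: "w ^ m = 1" and ord: "\<forall>j. w ^ j = 1 \<longrightarrow> m dvd j" and n: "n < m" and k: "k < m"
  shows "(\<Sum>i<m. (w ^ (n + m - k)) ^ i) = (if n = k then of_nat m else 0)"
proof (cases "n = k")
  case True
  then have "w ^ (n + m - k) = 1" using w1 by simp
  then show ?thesis using True by simp
next
  case False
  have "w ^ (n + m - k) \<noteq> 1"
  proof
    assume "w ^ (n + m - k) = 1"
    then have "m dvd (n + m - k)" using ord by blast
    then obtain c where c: "n + m - k = m * c" by blast
    have "0 < n + m - k" "n + m - k < 2 * m" using n k by auto
    then have "c = 1" using c by (metis One_nat_def less_2_cases mult_0_right mult_less_cancel1 not_gr0 mult.commute)
    then show False using c False n k by simp
  qed
  moreover have "(w ^ (n + m - k)) ^ m = 1" using w1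
    by (metis mult.commute power_mult power_one)
  ultimately show ?thesis using False by (simp add: sum_gp_strict)
qed

lemma poly_root_avg:
  fixes w :: "'k::field" and p :: "'k poly"
  assumes w1: "w ^ m = 1" and ord: "\<forall>j. w ^ j = 1 \<longrightarrow> m dvd j" and deg: "degree p < m" and k: "k < m"
  shows "(\<Sum>i<m. poly p (w ^ i * s) * (w ^ i) ^ (m - k)) = of_nat m * coeff p k * s ^ k"
proof -
  let ?D = "degree p"
  have "(\<Sum>i<m. poly p (w ^ i * s) * (w ^ i) ^ (m - k)) =
        (\<Sum>i<m. \<Sum>n\<le>?D. coeff p n * s ^ n * (w ^ (n + m - k)) ^ i)"
  proof (rule sum.cong[OF refl])
    fix i assume "i \<in> {..<m}"
    have "poly p (w ^ i * s) * (w ^ i) ^ (m - k) = (\<Sum>n\<le>?D. coeff p n * (w ^ i * s) ^ n * (w ^ i) ^ (m - k))"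
      by (simp add: poly_altdef sum_distrib_right)
    also have "\<dots> = (\<Sum>n\<le>?D. coeff p n * s ^ n * (w ^ (n + m - k)) ^ i)"
    proof (rule sum.cong[OF refl])
      fix n assume "n \<in> {..?D}"
      have e: "n + m - k = n + (m - k)" using k by simp
      show "coeff p n * (w ^ i * s) ^ n * (w ^ i) ^ (m - k) = coeff p n * s ^ n * (w ^ (n + m - k)) ^ i"
        unfolding e by (simp add: power_mult_distrib power_add power_mult[symmetric] mult.commute mult.left_commute)
    qed
    finally show "poly p (w ^ i * s) * (w ^ i) ^ (m - k) = (\<Sum>n\<le>?D. coeff p n * s ^ n * (w ^ (n + m - k)) ^ i)" .
  qed
  also have "\<dots> = (\<Sum>n\<le>?D. coeff p n * s ^ n * (\<Sum>i<m. (w ^ (n + m - k)) ^ i))"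
    by (subst sum.swap) (simp add: sum_distrib_left)
  also have "\<dots> = (\<Sum>n\<le>?D. if n = k then coeff p n * s ^ n * of_nat m else 0)"
    using root_sum[OF w1 ord _ k] deg by (intro sum.cong refl) auto
  also have "\<dots> = of_nat m * coeff p k * s ^ k"
  proof (cases "k \<le> ?D")
    case True then show ?thesis by (simp add: sum.delta)
  next
    case False then show ?thesis by (simp add: coeff_eq_0)
  qed
  finally show ?thesis .
qed


context fixes av :: "'k::field \<Rightarrow> real" assumes av: "is_abs_val av"
begin

lemma av_root_one: assumes "w ^ m = 1" "m > 0" shows "av w = 1"
proof -
  have "av w ^ m = 1 ^ m" using assms av_power[OF av, of w m] av_1[OF av] by simp
  then show ?thesis using power_eq_imp_eq_base[of "av w" m 1] av_nonneg[OF av] assms by simp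
qed

lemma poly_weak:
  fixes p :: "'k poly"
  assumes alg: "alg_closed TYPE('k)" and q: "prime q" and aq: "av (of_nat q) \<ge> 1/2"
    and deg: "degree p < q ^ e"
    and bnd: "\<And>x. av x = av s \<Longrightarrow> av (poly p x) \<le> B" and ts: "av t \<le> av s"
  shows "av (poly p t) \<le> real (degree p + 1) * (2 * real q) ^ e * B"
proof -
  let ?m = "q ^ e" and ?D = "degree p"
  have qnz: "(of_nat q :: 'k) \<noteq> 0" using aq av_0[OF av] by auto
  obtain w :: 'k where w1: "w ^ ?m = 1" and ord: "\<forall>j. w ^ j = 1 \<longrightarrow> ?m dvd j"
    using exists_root_unity[OF alg q qnz] by blast
  have mpos: "?m > 0" using q prime_gt_0_nat by simp
  have aw: "av w = 1" using av_root_one[OF w1 mpos] .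
  have B0: "B \<ge> 0" using bnd[of s] av_nonneg[OF av, of "poly p s"] by simp
  have avm: "av (of_nat ?m :: 'k) = av (of_nat q) ^ e" using av_power[OF av, of "of_nat q :: 'k" e] by (simp add: of_nat_power)
  have avm2: "av (of_nat ?m :: 'k) \<ge> (1/2) ^ e" unfolding avm using aq by (intro power_mono) auto
  have coef: "av (coeff p k) * av s ^ k \<le> (2 * real q) ^ e * B" if k: "k \<le> ?D" for k
  proof -
    have km: "k < ?m" using k deg by simp
    have "av (of_nat ?m :: 'k) * (av (coeff p k) * av s ^ k) = av (of_nat ?m * coeff p k * s ^ k)"
      by (simp add: av_mult[OF av] av_power[OF av])
    also have "\<dots> = av (\<Sum>i<?m. poly p (w ^ i * s) * (w ^ i) ^ (?m - k))"
      using poly_root_avg[OF w1 ord deg km, of s] by simp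
    also have "\<dots> \<le> (\<Sum>i<?m. av (poly p (w ^ i * s) * (w ^ i) ^ (?m - k)))" by (rule av_sum[OF av])
    also have "\<dots> \<le> (\<Sum>i<?m. B)"
    proof (rule sum_mono)
      fix i assume "i \<in> {..<?m}"
      have "av (w ^ i * s) = av s" by (simp add: av_mult[OF av] av_power[OF av] aw)
      then show "av (poly p (w ^ i * s) * (w ^ i) ^ (?m - k)) \<le> B"
        using bnd by (simp add: av_mult[OF av] av_power[OF av] aw)
    qed
    also have "\<dots> = real ?m * B" by simp
    finally have 1: "av (of_nat ?m :: 'k) * (av (coeff p k) * av s ^ k) \<le> real ?m * B" .
    have 2: "(1/2) ^ e * (av (coeff p k) * av s ^ k) \<le> av (of_nat ?m :: 'k) * (av (coeff p k) * av s ^ k)"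
      using avm2 by (intro mult_right_mono) (auto intro!: mult_nonneg_nonneg zero_le_power av_nonneg[OF av])
    have "(1/2) ^ e * (av (coeff p k) * av s ^ k) \<le> real ?m * B" using 1 2 by linarith
    then have "av (coeff p k) * av s ^ k \<le> 2 ^ e * (real ?m * B)"
      by (simp add: field_simps power_divide)
    also have "\<dots> = (2 * real q) ^ e * B" by (simp add: power_mult_distrib)
    finally show ?thesis .
  qed
  have "av (poly p t) \<le> (\<Sum>k\<le>?D. av (coeff p k * t ^ k))"
    unfolding poly_altdef by (rule av_sum[OF av])
  also have "\<dots> \<le> (\<Sum>k\<le>?D. (2 * real q) ^ e * B)"
  proof (rule sum_mono)
    fix k assume k: "k \<in> {..?D}"
    have "av (coeff p k * t ^ k) = av (coeff p k) * av t ^ k" by (simp add: av_mult[OF av] av_power[OF av])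
    also have "\<dots> \<le> av (coeff p k) * av s ^ k"
      using ts by (intro mult_left_mono power_mono) (auto simp: av_nonneg[OF av])
    also have "\<dots> \<le> (2 * real q) ^ e * B" using coef k by simp
    finally show "av (coeff p k * t ^ k) \<le> (2 * real q) ^ e * B" .
  qed
  also have "\<dots> = real (degree p + 1) * (2 * real q) ^ e * B" by simp
  finally show ?thesis .
qed

end


lemma cube_geom_lim:
  fixes r :: real assumes r: "r > 1"
  shows "(\<lambda>n. real n ^ 3 / r ^ n) \<longlonglongrightarrow> 0"
proof -
  define y where "y = root 3 (1 / r)"
  have y0: "0 \<le> y" unfolding y_def using r by simp
  have y3: "y ^ 3 = 1 / r" unfolding y_def using r by (simp add: real_root_pow_pos2)
  have y1: "norm y < 1" using y0 r unfolding y_def by (simp add: real_root_lt_1_iff)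
  have "(\<lambda>n. (of_nat n * y ^ n) ^ 3) \<longlonglongrightarrow> 0 ^ 3"
    by (intro tendsto_power powser_times_n_limit_0 y1)
  moreover have "(of_nat n * y ^ n) ^ 3 = real n ^ 3 / r ^ n" for n
    by (simp add: power_mult_distrib power_mult[symmetric] mult.commute[of n 3] power_mult y3 power_divide)
  ultimately show ?thesis by simp
qed

context fixes av :: "'k::field \<Rightarrow> real" assumes av: "is_abs_val av"
begin

lemma exists_good_prime: "\<exists>q. prime q \<and> q \<ge> 2 \<and> q \<le> 3 \<and> av (of_nat q :: 'k) \<ge> 1/2"
proof -
  have "(1::'k) = of_nat 3 - of_nat 2" by simp
  then have "1 \<le> av (of_nat 3 :: 'k) + av (of_nat 2 :: 'k)"
    using av_diff_le[OF av, of "of_nat 3 :: 'k" "of_nat 2"] av_1[OF av] by metis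
  then have "av (of_nat 3 :: 'k) \<ge> 1/2 \<or> av (of_nat 2 :: 'k) \<ge> 1/2" by linarith
  then show ?thesis
  proof
    assume "av (of_nat 3 :: 'k) \<ge> 1/2"
    then show ?thesis by (intro exI[of _ "3::nat"]) simp
  next
    assume "av (of_nat 2 :: 'k) \<ge> 1/2"
    then show ?thesis by (intro exI[of _ "2::nat"]) simp
  qed
qed

lemma poly_max:
  fixes p :: "'k poly"
  assumes alg: "alg_closed TYPE('k)"
    and bnd: "\<And>x. av x = av s \<Longrightarrow> av (poly p x) \<le> B" and ts: "av t \<le> av s"
  shows "av (poly p t) \<le> B"
proof (rule ccontr)
  assume "\<not> av (poly p t) \<le> B"
  then have TB: "av (poly p t) > B" by simp
  obtain q where q: "prime q" "q \<ge> 2" "q \<le> 3" "av (of_nat q :: 'k) \<ge> 1/2" using exists_good_prime by blast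
  let ?T = "av (poly p t)" and ?D = "degree p"
  define c where "c = real (?D + 1) * (2 * real q) ^ (?D + 1)"
  have B0: "B \<ge> 0" using bnd[of s] av_nonneg[OF av, of "poly p s"] by simp
  have key: "?T ^ (q ^ j) \<le> c * real (q ^ j) ^ 3 * B ^ (q ^ j)" for j
  proof -
    let ?N = "q ^ j" and ?e = "j + ?D + 1"
    have Npos: "?N \<ge> 1" using q by simp
    have "?D < q ^ (?D + 1)"
    proof -
      have "?D < 2 ^ ?D" by (rule less_exp)
      also have "(2::nat) ^ ?D \<le> q ^ ?D" using q by (intro power_mono) auto
      also have "q ^ ?D \<le> q ^ (?D + 1)" using q by (intro power_increasing) auto
      finally show ?thesis .
    qed
    then have "?D * ?N < q ^ (?D + 1) * ?N" using Npos q by simp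
    then have d1: "degree (p ^ ?N) < q ^ ?e"
    proof -
      have "q ^ ?e = q ^ (?D + 1) * ?N" by (simp add: power_add mult.commute)
      then show ?thesis using degree_power_le[of p ?N] \<open>?D * ?N < q ^ (?D + 1) * ?N\<close> by linarith
    qed
    have "av (poly (p ^ ?N) t) \<le> real (degree (p ^ ?N) + 1) * (2 * real q) ^ ?e * B ^ ?N"
    proof (rule poly_weak[OF av alg q(1) q(4) d1 _ ts])
      fix x assume "av x = av s"
      then have "av (poly p x) \<le> B" by (rule bnd)
      then show "av (poly (p ^ ?N) x) \<le> B ^ ?N"
        by (simp add: av_power[OF av] power_mono av_nonneg[OF av])
    qed
    moreover have "av (poly (p ^ ?N) t) = ?T ^ ?N" by (simp add: av_power[OF av])
    moreover have "real (degree (p ^ ?N) + 1) \<le> real (?D + 1) * real ?N"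
    proof -
      have "degree (p ^ ?N) + 1 \<le> ?D * ?N + ?N" using degree_power_le[of p ?N] Npos by simp
      then have "real (degree (p ^ ?N) + 1) \<le> real (?D * ?N + ?N)" by (simp only: of_nat_le_iff)
      then show ?thesis by (simp add: algebra_simps)
    qed
    moreover have "(2 * real q) ^ j \<le> real ?N ^ 2"
    proof -
      have "2 * real q \<le> real q ^ 2" using q by (simp add: power2_eq_square)
      then have "(2 * real q) ^ j \<le> (real q ^ 2) ^ j" by (intro power_mono) auto
      then show ?thesis by (simp add: power_mult[symmetric] mult.commute)
    qed
    ultimately have "?T ^ ?N \<le> (real (?D + 1) * real ?N) * ((2 * real q) ^ (?D + 1) * real ?N ^ 2) * B ^ ?N"
    proof -
      assume a: "av (poly (p ^ ?N) t) \<le> real (degree (p ^ ?N) + 1) * (2 * real q) ^ ?e * B ^ ?N"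
        "av (poly (p ^ ?N) t) = ?T ^ ?N" "real (degree (p ^ ?N) + 1) \<le> real (?D + 1) * real ?N"
        "(2 * real q) ^ j \<le> real ?N ^ 2"
      have e: "(2 * real q) ^ ?e = (2 * real q) ^ (?D + 1) * (2 * real q) ^ j" by (simp add: power_add)
      have "real (degree (p ^ ?N) + 1) * (2 * real q) ^ ?e * B ^ ?N
          \<le> (real (?D + 1) * real ?N) * ((2 * real q) ^ (?D + 1) * real ?N ^ 2) * B ^ ?N"
        unfolding e using a(3,4) B0 q
        by (intro mult_right_mono mult_mono) auto
      then show ?thesis using a(1,2) by linarith
    qed
    then show ?thesis unfolding c_def by (simp add: algebra_simps power3_eq_cube power2_eq_square)
  qed
  have cpos: "c > 0" unfolding c_def using q by simp
  show False
  proof (cases "B = 0")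
    case True
    have "?T ^ (q ^ 0) \<le> 0" using key[of 0] True by simp
    then show False using TB True by simp
  next
    case False
    then have Bp: "B > 0" using B0 by simp
    define r where "r = ?T / B"
    have r1: "r > 1" unfolding r_def using TB Bp by simp
    have "eventually (\<lambda>n. real n ^ 3 / r ^ n < 1 / c) sequentially"
      using cube_geom_lim[OF r1] cpos by (intro order_tendstoD) auto
    then obtain M where M: "\<And>n. n \<ge> M \<Longrightarrow> real n ^ 3 / r ^ n < 1 / c"
      unfolding eventually_sequentially by blast
    have "q ^ M \<ge> M"
    proof -
      have "M < 2 ^ M" by (rule less_exp)
      also have "(2::nat) ^ M \<le> q ^ M" using q by (intro power_mono) auto
      finally show ?thesis by simp
    qed
    then have 1: "real (q ^ M) ^ 3 / r ^ (q ^ M) < 1 / c" using M by blast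
    have "?T ^ (q ^ M) = r ^ (q ^ M) * B ^ (q ^ M)" unfolding r_def using Bp by (simp add: power_divide)
    then have "r ^ (q ^ M) * B ^ (q ^ M) \<le> c * real (q ^ M) ^ 3 * B ^ (q ^ M)" using key[of M] by simp
    then have "r ^ (q ^ M) \<le> c * real (q ^ M) ^ 3" using Bp by simp
    moreover have "r ^ (q ^ M) > 0" using r1 by simp
    ultimately show False using 1 cpos by (simp add: field_simps)
  qed
qed

end


context fixes av :: "'k::field \<Rightarrow> real" assumes av: "is_abs_val av"
begin

lemma exists_sqrt:
  assumes alg: "alg_closed TYPE('k)" shows "\<exists>y::'k. y ^ 2 = x"
proof -
  have "degree [:-x, 0, 1:] = 2" by simp
  then obtain y where "poly [:-x, 0, 1:] y = 0" using alg_root[OF alg, of "[:-x, 0, 1:]"] by auto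
  then have "y * y = x" by (simp add: algebra_simps)
  then show ?thesis by (auto simp: power2_eq_square)
qed

lemma av_sqrt: assumes "y ^ 2 = x" shows "av y = sqrt (av x)"
  using assms av_power[OF av, of y 2] av_nonneg[OF av, of y] by (metis real_sqrt_unique)

lemma terms_bounded:
  assumes "av_sums av (\<lambda>n. c n * z ^ n) S"
  shows "\<exists>G. \<forall>n. av (c n) * av z ^ n \<le> G"
proof -
  let ?P = "\<lambda>n. (\<Sum>i<n. c i * z ^ i)"
  have lim: "(\<lambda>n. av (S - ?P n)) \<longlonglongrightarrow> 0" using assms unfolding av_sums_def by simp
  then have "eventually (\<lambda>n. av (S - ?P n) < 1) sequentially" by (intro order_tendstoD) auto
  then obtain M where M: "\<And>n. n \<ge> M \<Longrightarrow> av (S - ?P n) < 1" unfolding eventually_sequentially by blast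
  define G where "G = 2 + (\<Sum>n<M. av (c n) * av z ^ n)"
  have "av (c n) * av z ^ n \<le> G" for n
  proof (cases "n < M")
    case True
    have "av (c n) * av z ^ n \<le> (\<Sum>n<M. av (c n) * av z ^ n)"
      using True by (intro member_le_sum) (auto simp: av_nonneg[OF av])
    moreover have "(\<Sum>n<M. av (c n) * av z ^ n) \<ge> 0" by (intro sum_nonneg) (auto simp: av_nonneg[OF av])
    ultimately show ?thesis unfolding G_def by linarith
  next
    case False
    have "c n * z ^ n = (S - ?P n) - (S - ?P (Suc n))" by simp
    then have "av (c n * z ^ n) \<le> av (S - ?P n) + av (S - ?P (Suc n))"
      by (metis av_diff_le[OF av])
    also have "\<dots> < 2" using M[of n] M[of "Suc n"] False by simp
    finally have "av (c n) * av z ^ n < 2" by (simp add: av_mult[OF av] av_power[OF av])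
    moreover have "(\<Sum>n<M. av (c n) * av z ^ n) \<ge> 0" by (intro sum_nonneg) (auto simp: av_nonneg[OF av])
    ultimately show ?thesis unfolding G_def by linarith
  qed
  then show ?thesis by blast
qed

lemma geom_tail:
  fixes lam :: real assumes "0 \<le> lam" "lam < 1"
  shows "(\<Sum>n\<in>{M..<M'}. lam ^ n) \<le> lam ^ M / (1 - lam)"
proof (cases "M \<le> M'")
  case True
  have "(\<Sum>n\<in>{M..<M'}. lam ^ n) = (\<Sum>i<M' - M. lam ^ (M + i))"
    using True by (intro sum.reindex_bij_witness[of _ "\<lambda>i. M + i" "\<lambda>n. n - M"]) auto
  also have "\<dots> = lam ^ M * (\<Sum>i<M' - M. lam ^ i)" by (simp add: power_add sum_distrib_left)
  also have "(\<Sum>i<M' - M. lam ^ i) = (1 - lam ^ (M' - M)) / (1 - lam)"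
    using assms by (simp add: sum_gp_strict)
  also have "\<dots> \<le> 1 / (1 - lam)" using assms by (intro divide_right_mono) auto
  finally show ?thesis using assms by (simp add: mult_left_mono divide_inverse)
next
  case False then show ?thesis using assms by simp
qed

lemma series_max:
  assumes alg: "alg_closed TYPE('k)" and an: "analytic_D av f"
    and bnd: "\<And>x. av x = av s \<Longrightarrow> av (f x) \<le> B" and s1: "av s < 1" and ts: "av t \<le> av s"
  shows "av (f t) \<le> B"
proof (cases "s = 0")
  case True
  then have "av t = 0" using ts av_nonneg[OF av, of t] av_0[OF av] by simp
  then have "t = 0" using av_zero_iff[OF av] by simp
  then show ?thesis using bnd True by simp
next
  case False
  then have "av s \<noteq> 0" using av_zero_iff[OF av] by simp
  then have sp: "av s > 0" using av_nonneg[OF av, of s] by simp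
  obtain c where c: "\<And>x. av x < 1 \<Longrightarrow> av_sums av (\<lambda>n. c n * x ^ n) (f x)"
    using an unfolding analytic_D_def by blast
  obtain s' where s': "s' ^ 2 = s" using exists_sqrt[OF alg] by blast
  define lam where "lam = av s'"
  have lam: "lam = sqrt (av s)" unfolding lam_def using av_sqrt[OF s'] .
  have lam0: "0 < lam" "lam < 1" using sp s1 lam by auto
  have ss: "av s = lam * lam" using lam sp by simp
  obtain G where G: "\<And>n. av (c n) * lam ^ n \<le> G"
    using terms_bounded[OF c[of s']] lam0 unfolding lam_def by blast
  let ?P = "\<lambda>M x. (\<Sum>i<M. c i * x ^ i)"
  have tail: "av (f x - ?P M x) \<le> G * lam ^ M / (1 - lam)" if x: "av x \<le> av s" for x M
  proof -
    have x1: "av x < 1" using x s1 by simp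
    have trm: "av (c n * x ^ n) \<le> G * lam ^ n" for n
    proof -
      have "av (c n * x ^ n) = av (c n) * av x ^ n" by (simp add: av_mult[OF av] av_power[OF av])
      also have "\<dots> \<le> av (c n) * (lam * lam) ^ n"
        using x ss by (intro mult_left_mono power_mono) (auto simp: av_nonneg[OF av])
      also have "\<dots> = (av (c n) * lam ^ n) * lam ^ n" by (simp add: power_mult_distrib)
      also have "\<dots> \<le> G * lam ^ n" using G[of n] lam0 by (intro mult_right_mono) auto
      finally show ?thesis .
    qed
    have G0: "G \<ge> 0" using G[of 0] av_nonneg[OF av, of "c 0"] by simp
    have lim: "(\<lambda>n. av (f x - ?P n x)) \<longlonglongrightarrow> 0" using c[OF x1] unfolding av_sums_def by simp
    show ?thesis
    proof (rule field_le_epsilon)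
      fix e :: real assume e: "e > 0"
      have "eventually (\<lambda>n. av (f x - ?P n x) < e) sequentially" using lim e by (intro order_tendstoD) auto
      then obtain M1 where M1: "\<And>n. n \<ge> M1 \<Longrightarrow> av (f x - ?P n x) < e" unfolding eventually_sequentially by blast
      define M' where "M' = max M M1"
      have "?P M' x = ?P M x + (\<Sum>n\<in>{M..<M'}. c n * x ^ n)"
        unfolding M'_def lessThan_atLeast0 by (rule sum.atLeastLessThan_concat[symmetric]) auto
      then have "f x - ?P M x = (f x - ?P M' x) + (\<Sum>n\<in>{M..<M'}. c n * x ^ n)"
        by (simp add: algebra_simps)
      then have "av (f x - ?P M x) \<le> av (f x - ?P M' x) + av (\<Sum>n\<in>{M..<M'}. c n * x ^ n)"
        by (metis av_add[OF av])
      also have "av (\<Sum>n\<in>{M..<M'}. c n * x ^ n) \<le> (\<Sum>n\<in>{M..<M'}. G * lam ^ n)"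
        by (rule order_trans[OF av_sum[OF av]]) (intro sum_mono trm)
      also have "(\<Sum>n\<in>{M..<M'}. G * lam ^ n) \<le> G * (lam ^ M / (1 - lam))"
        unfolding sum_distrib_left[symmetric] using G0 geom_tail[of lam M M'] lam0
        by (intro mult_left_mono) auto
      finally show "av (f x - ?P M x) \<le> G * lam ^ M / (1 - lam) + e"
        using M1[of M'] unfolding M'_def by simp
    qed
  qed
  show ?thesis
  proof (rule field_le_epsilon)
    fix e :: real assume e: "e > 0"
    have G0: "G \<ge> 0" using G[of 0] av_nonneg[OF av, of "c 0"] by simp
    have "(\<lambda>M. G * lam ^ M / (1 - lam)) \<longlonglongrightarrow> G * 0 / (1 - lam)"
      using lam0 by (intro tendsto_intros) auto
    then have "eventually (\<lambda>M. G * lam ^ M / (1 - lam) < e / 2) sequentially"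
      using e by (intro order_tendstoD) auto
    then obtain M where M: "G * lam ^ M / (1 - lam) < e / 2" unfolding eventually_sequentially by blast
    define p where "p = (\<Sum>i<M. monom (c i) i)"
    have pp: "poly p x = ?P M x" for x unfolding p_def by (simp add: poly_sum poly_monom)
    have "av (poly p t) \<le> B + e / 2"
    proof (rule poly_max[OF av alg _ ts])
      fix x assume x: "av x = av s"
      have "av (poly p x) \<le> av (f x) + av (f x - ?P M x)"
        unfolding pp using av_add[OF av, of "f x" "?P M x - f x"] av_uminus[OF av, of "f x - ?P M x"] by simp
      also have "\<dots> \<le> B + e / 2"
      proof -
        have "av (f x - ?P M x) \<le> G * lam ^ M / (1 - lam)" using tail x by simp
        then show ?thesis using bnd[OF x] M by linarith
      qed
      finally show "av (poly p x) \<le> B + e / 2" .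
    qed
    moreover have "av (f t) \<le> av (poly p t) + av (f t - ?P M t)"
      unfolding pp using av_add[OF av, of "?P M t" "f t - ?P M t"] by simp
    moreover have "av (f t - ?P M t) \<le> e / 2" using tail[OF ts, of M] M by linarith
    ultimately show "av (f t) \<le> B + e" by simp
  qed
qed

end


theorem lemma4p1:
  fixes av :: "'k::field \<Rightarrow> real"
    and d :: nat and alpha :: "nat \<Rightarrow> 'k \<Rightarrow> 'k" and P :: "'k \<Rightarrow> 'k \<Rightarrow> 'k"
    and C :: real and a :: "'k \<Rightarrow> 'k" and u :: "nat \<Rightarrow> 'k \<Rightarrow> 'k"
    and g :: "nat \<Rightarrow> 'k \<Rightarrow> real"
    and l :: nat and N :: nat and Q :: "nat \<Rightarrow> 'k poly" and A :: real
    and n0 :: nat and r0 :: real and r :: "nat \<Rightarrow> real" and C1 :: real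
  assumes av: "is_abs_val av" and compl: "av_complete av" and alg: "alg_closed TYPE('k)"
    and d: "d \<ge> 2"
    and P_def: "\<And>t z. P t z = (\<Sum>i\<le>d. alpha i t * z ^ (d - i))"
    and alpha_mero: "\<And>i. i \<le> d \<Longrightarrow> mero_D av (alpha i)"
    and alpha0: "\<And>t. 0 < av t \<Longrightarrow> av t < 1 \<Longrightarrow> alpha 0 t \<noteq> 0"
    and C_pos: "C > 0"
    and C_bound: "\<And>t z. 0 < av t \<Longrightarrow> av t \<le> 1/2 \<Longrightarrow>
        \<bar>ln (max 1 (av (P t z))) / real d - ln (max 1 (av z))\<bar> \<le> C * ln (1 / av t)"
    and a_mero: "mero_D av a"
    and u_an: "\<And>m. analytic_D av (u m)"
    and u_def: "\<And>m t. 0 < av t \<Longrightarrow> av t < 1 \<Longrightarrow> u m t = (P t ^^ m) (a t)"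
    and g_def: "\<And>m t. g m t = ln (max 1 (av (u m t))) / real d ^ m"
    and l: "real l \<ge> C * real d"
    and Q: "\<And>n. \<exists>i\<in>{1..N}. \<exists>h. analytic_D av h \<and>
              (\<forall>t. 0 < av t \<and> av t < 1 \<longrightarrow> u n t - poly (Q i) t = t ^ l * h t)"
    and A_def: "A = Max ((\<lambda>j. (SUP t\<in>{t. av t < 1}. av (poly (Q j) t)) + 2) ` {1..N})"
    and n0: "n0 \<ge> 1"
    and r0: "0 < r0" "r0 \<le> 1/2"
    and u_n0: "\<And>t. av t < r0 \<Longrightarrow> av (u n0 t) \<le> ln A"
    and r_def: "\<And>j. r j = r0 ^ (2 ^ j)"
    and C1_def: "C1 = real d / (real d - 1) * ln (3 * A)"
  shows "\<forall>j. \<forall>t. av t < r j \<longrightarrow> g (n0 + j) t \<le> C1 / real d ^ n0"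
proof -
  note avn = av_nonneg[OF av] and avz = av_zero_iff[OF av] and avm = av_mult[OF av]
    and avp = av_power[OF av]
  have N1: "N \<ge> 1" using Q[of 0] by auto
  define S where "S j = (SUP t\<in>{t. av t < 1}. av (poly (Q j) t))" for j
  have bddS: "bdd_above ((\<lambda>t. av (poly (Q j) t)) ` {t. av t < 1})" for j
  proof (rule bdd_aboveI2)
    fix t assume t: "t \<in> {t. av t < 1}"
    have "av (poly (Q j) t) \<le> (\<Sum>k\<le>degree (Q j). av (coeff (Q j) k * t ^ k))"
      unfolding poly_altdef by (rule av_sum[OF av])
    also have "\<dots> \<le> (\<Sum>k\<le>degree (Q j). av (coeff (Q j) k))"
    proof (rule sum_mono)
      fix k
      have "av t ^ k \<le> 1" using t avn[of t] by (simp add: power_le_one)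
      then show "av (coeff (Q j) k * t ^ k) \<le> av (coeff (Q j) k)"
        by (simp add: avm avp mult_left_le avn)
    qed
    finally show "av (poly (Q j) t) \<le> (\<Sum>k\<le>degree (Q j). av (coeff (Q j) k))" .
  qed
  have QS: "av (poly (Q j) t) \<le> S j" if "av t < 1" for j t
    unfolding S_def using that bddS by (intro cSUP_upper) auto
  have S0: "S j \<ge> 0" for j using QS[of 0 j] avn[of "poly (Q j) 0"] av_0[OF av] by simp
  have finA: "finite ((\<lambda>j. S j + 2) ` {1..N})" by simp
  have SA: "S j + 2 \<le> A" if "j \<in> {1..N}" for j
    unfolding A_def S_def[symmetric] using that finA by (intro Max_ge) auto
  have QA: "av (poly (Q j) t) \<le> A - 2" if "j \<in> {1..N}" "av t < 1" for j t
    using QS[OF that(2), of j] SA[OF that(1)] by simp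
  have A2: "A \<ge> 2" using SA[of 1] S0[of 1] N1 by simp
  have lnA: "ln (3 * A) \<ge> 0" using A2 by simp
  have dpos: "real d \<ge> 2" using d by simp
  have rpos: "0 < r j" for j using r_def r0 by simp
  have rle: "r j \<le> 1/2" for j
  proof -
    have "r0 ^ (2 ^ j) \<le> r0 ^ 1" using r0 by (intro power_decreasing) auto
    then show ?thesis using r_def r0 by simp
  qed
  have rSuc: "r (Suc j) = r j * r j" for j
    unfolding r_def by (simp add: power_mult power2_eq_square power_mult_distrib)
  define M where "M j = ln (3 * A) * (\<Sum>i\<le>j. real d ^ i)" for j
  have M0: "M j \<ge> 0" for j unfolding M_def using lnA by (intro mult_nonneg_nonneg sum_nonneg) auto
  have MSuc: "M (Suc j) = real d * M j + ln (3 * A)" for j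
  proof -
    have "(\<Sum>i\<le>Suc j. real d ^ i) = 1 + real d * (\<Sum>i\<le>j. real d ^ i)"
      by (simp only: sum.atMost_Suc_shift power_Suc sum_distrib_left power_0)
    then show ?thesis unfolding M_def by (simp add: algebra_simps)
  qed
  have nontriv_small: "\<exists>s. s \<noteq> 0 \<and> av s < e" if ex: "\<exists>x. 0 < av x \<and> av x < 1" and epos: "e > 0" for e
  proof -
    obtain x where x: "0 < av x" "av x < 1" using ex by blast
    have "(\<lambda>k. av x ^ k) \<longlonglongrightarrow> 0" using x by (intro LIMSEQ_power_zero) auto
    then have "eventually (\<lambda>k. av x ^ k < e) sequentially" using epos by (intro order_tendstoD) auto
    then obtain k where k: "av x ^ k < e" unfolding eventually_sequentially by blast
    have "x \<noteq> 0" using x(1) av_0[OF av] by auto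
    then have "x ^ k \<noteq> 0" by simp
    then show ?thesis using k by (intro exI[of _ "x ^ k"]) (simp add: avp)
  qed
  have triv_le1: "av y \<le> 1" if "\<not> (\<exists>x. 0 < av x \<and> av x < 1)" for y
  proof (rule ccontr)
    assume "\<not> av y \<le> 1"
    then have "av y > 1" by simp
    then have "y \<noteq> 0" using av_0[OF av] by auto
    have "av (1 / y) = 1 / av y" by (simp add: av_divide[OF av] av_1[OF av])
    then have "0 < av (1 / y)" "av (1 / y) < 1" using \<open>av y > 1\<close> by auto
    then show False using that by blast
  qed
  have claim: "\<forall>t. av t < r j \<longrightarrow> ln (max 1 (av (u (n0 + j) t))) \<le> M j" for j
  proof (induction j)
    case 0
    show ?case
    proof (intro allI impI)
      fix t assume "av t < r 0"
      then have "av (u n0 t) \<le> ln A" using u_n0 r_def by simp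
      moreover have "ln A \<le> 3 * A" using A2 ln_le_minus_one[of A] by simp
      ultimately have "max 1 (av (u n0 t)) \<le> 3 * A" using A2 by simp
      then have "ln (max 1 (av (u n0 t))) \<le> ln (3 * A)" by simp
      then show "ln (max 1 (av (u (n0 + 0) t))) \<le> M 0" unfolding M_def by simp
    qed
  next
    case (Suc j)
    define n where "n = n0 + j"
    have IH: "ln (max 1 (av (u n t))) \<le> M j" if "av t < r j" for t
      using Suc.IH that unfolding n_def by blast
    obtain i h where i: "i \<in> {1..N}" and han: "analytic_D av h"
      and hid: "\<And>t. 0 < av t \<and> av t < 1 \<Longrightarrow> u (Suc n) t - poly (Q i) t = t ^ l * h t"
      using Q[of "Suc n"] by blast
    define Y where "Y = 3 * A * exp (real d * M j)"
    have eM: "exp (real d * M j) \<ge> 1" using M0[of j] dpos by simp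
    have Ya: "0 \<le> (3 * A - 1) * (exp (real d * M j) - 1)"
      using eM A2 by (intro mult_nonneg_nonneg) auto
    have Yb: "(3 * A - 1) * (exp (real d * M j) - 1) = Y - 3 * A - exp (real d * M j) + 1"
      unfolding Y_def by (simp add: algebra_simps)
    have Yc: "Y = (3 * A - 1) * (exp (real d * M j) - 1) + 3 * A + exp (real d * M j) - 1"
      using Yb by simp
    have Y1: "2 * (A - 2) + exp (real d * M j) \<le> Y" using Yc Ya A2 by simp
    have Y2: "1 \<le> Y" using Y1 A2 eM by (smt (verit))
    have step1: "av (u (Suc n) t) \<le> Y" if t0: "t \<noteq> 0" and tr: "av t < r (Suc j)" for t
    proof -
      obtain s where s: "s ^ 2 = t" using exists_sqrt[OF av alg] by blast
      define \<sigma> where "\<sigma> = av s"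
      have \<sigma>: "\<sigma> = sqrt (av t)" unfolding \<sigma>_def using av_sqrt[OF av s] .
      have tpos: "av t > 0" using t0 avz avn[of t] by (simp add: order_le_less)
      have \<sigma>pos: "\<sigma> > 0" using \<sigma> tpos by simp
      have \<sigma>r: "\<sigma> < r j"
      proof -
        have "av t < r j * r j" using tr rSuc by simp
        then have "sqrt (av t) < sqrt (r j * r j)" by (rule real_sqrt_less_mono)
        then show ?thesis using \<sigma> rpos[of j] by simp
      qed
      have \<sigma>1: "\<sigma> < 1" using \<sigma>r rle[of j] by simp
      have tsig: "av t = \<sigma> * \<sigma>" using \<sigma> tpos by simp
      have tle: "av t \<le> \<sigma>" using tsig \<sigma>pos \<sigma>1 by (simp add: mult_left_le)
      define X where "X = exp (real d * (M j + C * ln (1 / \<sigma>)))"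
      define Bh where "Bh = (X + (A - 2)) / \<sigma> ^ l"
      have hb: "av (h w) \<le> Bh" if w: "av w = \<sigma>" for w
      proof -
        have w0: "0 < av w" "av w < 1" "av w \<le> 1/2" using w \<sigma>pos \<sigma>1 \<sigma>r rle[of j] by auto
        have ih: "ln (max 1 (av (u n w))) \<le> M j" using IH[of w] w \<sigma>r by simp
        have un: "u (Suc n) w = P w (u n w)" using u_def[of w n] u_def[of w "Suc n"] w0 by simp
        have cb: "\<bar>ln (max 1 (av (P w (u n w)))) / real d - ln (max 1 (av (u n w)))\<bar> \<le> C * ln (1 / \<sigma>)"
          using C_bound[of w "u n w"] w0 w by simp
        then have cb2: "ln (max 1 (av (P w (u n w)))) / real d - ln (max 1 (av (u n w))) \<le> C * ln (1 / \<sigma>)"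
          by (simp add: abs_le_iff)
        have "ln (max 1 (av (u (Suc n) w))) / real d \<le> M j + C * ln (1 / \<sigma>)"
          unfolding un using ih cb2 by linarith
        then have "ln (max 1 (av (u (Suc n) w))) \<le> real d * (M j + C * ln (1 / \<sigma>))"
          using dpos by (simp add: field_simps)
        then have "exp (ln (max 1 (av (u (Suc n) w)))) \<le> X" unfolding X_def using exp_le_cancel_iff by blast
        moreover have "exp (ln (max 1 (av (u (Suc n) w)))) = max 1 (av (u (Suc n) w))"
          by (intro exp_ln) simp
        ultimately have "max 1 (av (u (Suc n) w)) \<le> X" by simp
        then have uX: "av (u (Suc n) w) \<le> X" by simp
        have "av (w ^ l * h w) = av (u (Suc n) w - poly (Q i) w)" using hid[of w] w0 by simp
        also have "\<dots> \<le> X + (A - 2)"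
          using av_diff_le[OF av, of "u (Suc n) w" "poly (Q i) w"] uX QA[OF i w0(2)] by linarith
        finally have "\<sigma> ^ l * av (h w) \<le> X + (A - 2)" using w by (simp add: avm avp)
        then show ?thesis unfolding Bh_def using \<sigma>pos by (simp add: field_simps)
      qed
      have ht: "av (h t) \<le> Bh"
        using series_max[OF av alg han, of s Bh t] hb \<sigma>1 tle unfolding \<sigma>_def by blast
      have t01: "0 < av t \<and> av t < 1" using tpos tle \<sigma>1 by simp
      have "u (Suc n) t = poly (Q i) t + t ^ l * h t" using hid[OF t01] by (simp add: algebra_simps)
      then have "av (u (Suc n) t) \<le> av (poly (Q i) t) + av t ^ l * av (h t)"
        using av_add[OF av, of "poly (Q i) t" "t ^ l * h t"] by (simp add: avm avp)
      also have "\<dots> \<le> (A - 2) + (\<sigma> * \<sigma>) ^ l * Bh"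
        using QA[OF i] t01 ht tsig by (intro add_mono mult_left_mono) auto
      also have "(\<sigma> * \<sigma>) ^ l * Bh = \<sigma> ^ l * X + \<sigma> ^ l * (A - 2)"
        unfolding Bh_def using \<sigma>pos by (simp add: power_mult_distrib field_simps)
      also have "\<sigma> ^ l * X \<le> exp (real d * M j)"
      proof -
        have "\<sigma> ^ l = exp (real l * ln \<sigma>)" using \<sigma>pos by (simp add: exp_of_nat_mult)
        moreover have "X = exp (real d * M j - real d * C * ln \<sigma>)" unfolding X_def using \<sigma>pos
          by (simp add: ln_div algebra_simps)
        ultimately have "\<sigma> ^ l * X = exp (real d * M j + (real l - C * real d) * ln \<sigma>)"
          by (simp add: exp_add[symmetric] algebra_simps)
        moreover have "(real l - C * real d) * ln \<sigma> \<le> 0" using l \<sigma>pos \<sigma>1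
          by (intro mult_nonneg_nonpos) auto
        ultimately show ?thesis by simp
      qed
      also have "\<sigma> ^ l * (A - 2) \<le> A - 2"
        using \<sigma>pos \<sigma>1 A2 by (intro mult_left_le_one_le) (auto simp: power_le_one)
      finally have "av (u (Suc n) t) \<le> 2 * (A - 2) + exp (real d * M j)" by simp
      also have "\<dots> \<le> Y" by (rule Y1)
      finally show ?thesis .
    qed
    have step2: "av (u (Suc n) t) \<le> Y" if tr: "av t < r (Suc j)" for t
    proof (cases "t = 0")
      case False then show ?thesis using step1 tr by blast
    next
      case True
      show ?thesis
      proof (cases "\<exists>x. 0 < av x \<and> av x < 1")
        case True
        obtain s where s: "s \<noteq> 0" "av s < r (Suc j)" using nontriv_small[OF True rpos] by blast
        have s1: "av s < 1" using s rle[of "Suc j"] by simp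
        have "av (u (Suc n) x) \<le> Y" if "av x = av s" for x
        proof -
          have "av s \<noteq> 0" using s(1) avz by simp
          then have xn: "x \<noteq> 0" using that av_0[OF av] by auto
          have "av x < r (Suc j)" using that s(2) by simp
          then show ?thesis using step1[OF xn] by simp
        qed
        moreover have "av t \<le> av s" using \<open>t = 0\<close> avn av_0[OF av] by simp
        ultimately show ?thesis using series_max[OF av alg u_an[of "Suc n"], of s Y t] s1 by blast
      next
        case False
        have "av (u (Suc n) t) \<le> 1" using triv_le1[OF False] .
        then show ?thesis using Y2 by linarith
      qed
    qed
    show ?case
    proof (intro allI impI)
      fix t assume tr: "av t < r (Suc j)"
      have "max 1 (av (u (Suc n) t)) \<le> Y" using step2[OF tr] Y2 by simp
      then have "ln (max 1 (av (u (Suc n) t))) \<le> ln Y" by (simp)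
      also have "ln Y = ln (3 * A) + real d * M j" unfolding Y_def using A2 by (simp add: ln_mult)
      finally show "ln (max 1 (av (u (n0 + Suc j) t))) \<le> M (Suc j)"
        unfolding MSuc n_def by simp
    qed
  qed
  show ?thesis
  proof (intro allI impI)
    fix j t assume tr: "av t < r j"
    have L: "ln (max 1 (av (u (n0 + j) t))) \<le> M j" using claim tr by blast
    have sumd: "(real d - 1) * (\<Sum>i\<le>j. real d ^ i) = real d ^ Suc j - 1"
    proof (induction j)
      case (Suc j) then show ?case by (simp add: algebra_simps)
    qed simp
    have "M j \<le> ln (3 * A) * (real d ^ Suc j / (real d - 1))"
    proof -
      have "(\<Sum>i\<le>j. real d ^ i) = (real d ^ Suc j - 1) / (real d - 1)"
        using sumd dpos by (simp add: field_simps)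
      also have "\<dots> \<le> real d ^ Suc j / (real d - 1)" using dpos by (intro divide_right_mono) auto
      finally show ?thesis unfolding M_def using lnA by (intro mult_left_mono) auto
    qed
    then have "g (n0 + j) t \<le> ln (3 * A) * (real d ^ Suc j / (real d - 1)) / real d ^ (n0 + j)"
      unfolding g_def using L dpos by (intro divide_right_mono) auto
    also have "\<dots> = C1 / real d ^ n0"
      unfolding C1_def using dpos by (simp add: field_simps power_add)
    finally show "g (n0 + j) t \<le> C1 / real d ^ n0" .
  qed
qed

end
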